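(* Let $(S,K,I)$ be a split graph and let $P=v_1v_2\ldots v_n$, with $n\geq 2$, be an induced path in the factor graph $\Phi(S)$. If $d_1=\max\{d_i: i\in[n]\}$, then for each $i\in[n]$ we have $d_i\geq d_j$ and $N_i\supseteq N_j$ for all $j$ with $i+2\leq j\leq n$.
   Context: A split graph $(S,K,I)$ is a graph $S$ together with a fixed partition $V(S)=K\dot\cup I$, where $K$ is a clique and $I$ is an independent set. For a vertex $v_i$ (or $i$) of $S$, $N_i$ denotes its open neighborhood in $S$ and $d_i=|N_i|$ its degree in $S$; for $u,v$ write $\eta_{uv}=|N_u\cap N_v|$. The factor graph $\Phi(S)$ is the loopless multigraph with vertex set $I$ in which, for distinct $u,v\in I$, there is one edge joining $u$ and $v$ for each 2-switch of $S$ acting on $u$ and $v$ (a 2-switch replaces edges $ab,cd$ with $ac,bd$ when $ab,cd\in E(S)$ and $ac,bd\notin E(S)$); equivalently, the multiplicity of the edge $uv$ is $\sigma_{uv}=(d_u-\eta_{uv})(d_v-\eta_{uv})$, and $u,v$ are adjacent in $\Phi(S)$ iff $\sigma_{uv}>0$. An induced path $v_1\ldots v_n$ in $\Phi(S)$ consists of distinct vertices with $v_iv_{i+1}$ adjacent for all $i$ and no other pair $v_iv_j$ adjacent (multiplicities are ignored for adjacency). *)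

theory Defs
  imports Main
begin

definition simple_graph :: "'a set \<Rightarrow> ('a \<Rightarrow> 'a \<Rightarrow> bool) \<Rightarrow> bool" where
  "simple_graph V E \<longleftrightarrow> finite V \<and>
     (\<forall>u v. E u v \<longrightarrow> u \<in> V \<and> v \<in> V) \<and>
     (\<forall>u v. E u v \<longrightarrow> E v u) \<and> (\<forall>v. \<not> E v v)"

definition split_graph :: "'a set \<Rightarrow> ('a \<Rightarrow> 'a \<Rightarrow> bool) \<Rightarrow> 'a set \<Rightarrow> 'a set \<Rightarrow> bool" where
  "split_graph V E K I \<longleftrightarrow> simple_graph V E \<and> K \<union> I = V \<and> K \<inter> I = {} \<and>
     (\<forall>u\<in>K. \<forall>v\<in>K. u \<noteq> v \<longrightarrow> E u v) \<and>
     (\<forall>u\<in>I. \<forall>v\<in>I. \<not> E u v)"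

definition nbhd :: "'a set \<Rightarrow> ('a \<Rightarrow> 'a \<Rightarrow> bool) \<Rightarrow> 'a \<Rightarrow> 'a set" where
  "nbhd V E v = {u \<in> V. E v u}"

definition deg :: "'a set \<Rightarrow> ('a \<Rightarrow> 'a \<Rightarrow> bool) \<Rightarrow> 'a \<Rightarrow> nat" where
  "deg V E v = card (nbhd V E v)"

definition eta :: "'a set \<Rightarrow> ('a \<Rightarrow> 'a \<Rightarrow> bool) \<Rightarrow> 'a \<Rightarrow> 'a \<Rightarrow> nat" where
  "eta V E u v = card (nbhd V E u \<inter> nbhd V E v)"

text \<open>Multiplicity of the edge uv in the factor graph.\<close>
definition sigma :: "'a set \<Rightarrow> ('a \<Rightarrow> 'a \<Rightarrow> bool) \<Rightarrow> 'a \<Rightarrow> 'a \<Rightarrow> nat" where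
  "sigma V E u v = (deg V E u - eta V E u v) * (deg V E v - eta V E u v)"

definition factor_adj :: "'a set \<Rightarrow> ('a \<Rightarrow> 'a \<Rightarrow> bool) \<Rightarrow> 'a set \<Rightarrow> 'a \<Rightarrow> 'a \<Rightarrow> bool" where
  "factor_adj V E I u v \<longleftrightarrow> u \<in> I \<and> v \<in> I \<and> u \<noteq> v \<and> sigma V E u v > 0"

text \<open>Induced path v_0 ... v_{n-1} (0-indexed list) in the factor graph.\<close>
definition factor_induced_path :: "'a set \<Rightarrow> ('a \<Rightarrow> 'a \<Rightarrow> bool) \<Rightarrow> 'a set \<Rightarrow> 'a list \<Rightarrow> bool" where
  "factor_induced_path V E I P \<longleftrightarrow> distinct P \<and> set P \<subseteq> I \<and>
     (\<forall>i j. i < length P \<longrightarrow> j < length P \<longrightarrow>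
        (factor_adj V E I (P ! i) (P ! j) \<longleftrightarrow> (i + 1 = j \<or> j + 1 = i)))"

end

theory Submission
  imports Defs
begin

lemma sigma_pos_iff:
  assumes "finite V"
  shows "sigma V E u v > 0 \<longleftrightarrow> \<not> nbhd V E u \<subseteq> nbhd V E v \<and> \<not> nbhd V E v \<subseteq> nbhd V E u"
proof -
  have fu: "finite (nbhd V E u)" and fv: "finite (nbhd V E v)"
    using assms unfolding nbhd_def by auto
  have a: "deg V E u - eta V E u v > 0 \<longleftrightarrow> \<not> nbhd V E u \<subseteq> nbhd V E v"
  proof -
    have "card (nbhd V E u \<inter> nbhd V E v) < card (nbhd V E u) \<longleftrightarrow> nbhd V E u \<inter> nbhd V E v \<subset> nbhd V E u"
    proof
      assume "card (nbhd V E u \<inter> nbhd V E v) < card (nbhd V E u)"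
      then show "nbhd V E u \<inter> nbhd V E v \<subset> nbhd V E u" by auto
    next
      assume "nbhd V E u \<inter> nbhd V E v \<subset> nbhd V E u"
      then show "card (nbhd V E u \<inter> nbhd V E v) < card (nbhd V E u)" using fu by (rule psubset_card_mono[rotated])
    qed
    then show ?thesis unfolding deg_def eta_def by auto
  qed
  have b: "deg V E v - eta V E u v > 0 \<longleftrightarrow> \<not> nbhd V E v \<subseteq> nbhd V E u"
  proof -
    have "card (nbhd V E u \<inter> nbhd V E v) < card (nbhd V E v) \<longleftrightarrow> nbhd V E u \<inter> nbhd V E v \<subset> nbhd V E v"
    proof
      assume "card (nbhd V E u \<inter> nbhd V E v) < card (nbhd V E v)"
      then show "nbhd V E u \<inter> nbhd V E v \<subset> nbhd V E v" by auto
    next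
      assume "nbhd V E u \<inter> nbhd V E v \<subset> nbhd V E v"
      then show "card (nbhd V E u \<inter> nbhd V E v) < card (nbhd V E v)" using fv by (rule psubset_card_mono[rotated])
    qed
    then show ?thesis unfolding deg_def eta_def by auto
  qed
  show ?thesis unfolding sigma_def using a b by simp
qed

theorem lemma2p2:
  fixes V K I :: "'a set" and E :: "'a \<Rightarrow> 'a \<Rightarrow> bool" and P :: "'a list"
  assumes "split_graph V E K I"
    and "factor_induced_path V E I P"
    and "length P \<ge> 2"
    and "\<forall>i < length P. deg V E (P ! i) \<le> deg V E (P ! 0)"
  shows "\<forall>i j. i < length P \<longrightarrow> j < length P \<longrightarrow> i + 2 \<le> j \<longrightarrow>
           deg V E (P ! j) \<le> deg V E (P ! i) \<and> nbhd V E (P ! j) \<subseteq> nbhd V E (P ! i)"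
proof -
  let ?N = "\<lambda>i. nbhd V E (P ! i)"
  have fin: "finite V" using assms(1) unfolding split_graph_def simple_graph_def by auto
  have finN: "\<And>i. finite (?N i)" using fin unfolding nbhd_def by auto
  have dist: "distinct P" and sub: "set P \<subseteq> I" and adj:
    "\<And>i j. i < length P \<Longrightarrow> j < length P \<Longrightarrow>
        (factor_adj V E I (P ! i) (P ! j) \<longleftrightarrow> (i + 1 = j \<or> j + 1 = i))"
    using assms(2) unfolding factor_induced_path_def by blast+
  have comp: "?N i \<subseteq> ?N j \<or> ?N j \<subseteq> ?N i" if "i < length P" "j < length P" "i + 2 \<le> j" for i j
  proof -
    have "\<not> factor_adj V E I (P ! i) (P ! j)" using adj[of i j] that by simp
    moreover have "P ! i \<in> I" "P ! j \<in> I" using sub that by auto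
    moreover have "P ! i \<noteq> P ! j" using dist that nth_eq_iff_index_eq[of P i j] by simp
    ultimately have "\<not> sigma V E (P ! i) (P ! j) > 0" unfolding factor_adj_def by auto
    then show ?thesis using sigma_pos_iff[OF fin, of E "P ! i" "P ! j"] by simp
  qed
  have inc: "\<not> ?N (Suc k) \<subseteq> ?N k" if "Suc k < length P" for k
  proof -
    have "factor_adj V E I (P ! k) (P ! Suc k)" using adj[of k "Suc k"] that by auto
    then have "sigma V E (P ! k) (P ! Suc k) > 0" unfolding factor_adj_def by auto
    then show ?thesis using sigma_pos_iff[OF fin, of E "P ! k" "P ! Suc k"] by simp
  qed
  have main: "\<forall>j. j < length P \<longrightarrow> i + 2 \<le> j \<longrightarrow> ?N j \<subseteq> ?N i" for i
  proof (induction i)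
    case 0
    show ?case
    proof (intro allI impI)
      fix j assume j: "j < length P" "0 + 2 \<le> j"
      have "?N 0 \<subseteq> ?N j \<or> ?N j \<subseteq> ?N 0" using comp[of 0 j] j by (metis add_0 le_less_trans zero_le)
      moreover have "deg V E (P ! j) \<le> deg V E (P ! 0)" using assms(4) j by auto
      ultimately show "?N j \<subseteq> ?N 0"
      proof (elim disjE)
        assume a: "?N 0 \<subseteq> ?N j"
        moreover have "card (?N j) \<le> card (?N 0)" using \<open>deg V E (P ! j) \<le> deg V E (P ! 0)\<close> unfolding deg_def .
        ultimately have "?N 0 = ?N j" using card_seteq[OF finN[of j] a] by blast
        then show ?thesis by simp
      qed simp
    qed
  next
    case (Suc k)
    show ?case
    proof (intro allI impI)
      fix j assume j: "j < length P" "Suc k + 2 \<le> j"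
      have "?N j \<subseteq> ?N k" using Suc j by auto
      moreover have "\<not> ?N (Suc k) \<subseteq> ?N k" using inc j by auto
      moreover have "?N (Suc k) \<subseteq> ?N j \<or> ?N j \<subseteq> ?N (Suc k)" using comp j by auto
      ultimately show "?N j \<subseteq> ?N (Suc k)" by blast
    qed
  qed
  show ?thesis
  proof (intro allI impI conjI)
    fix i j assume h: "i < length P" "j < length P" "i + 2 \<le> j"
    show "?N j \<subseteq> ?N i" using main h by auto
    then show "deg V E (P ! j) \<le> deg V E (P ! i)" unfolding deg_def using finN card_mono by blast
  qed
qed

end
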